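(* In the setting described in the context, assume (F1) and (F2), let $\gamma=\frac{\beta L}{L+\beta}$, and let $\alpha\in\big(0,\frac{2}{L+\beta}\big]$. Then for all $t\ge0$, $$\|\bar w(t+1)-w_*\|\le\Big(1-\gamma\alpha+\frac{\alpha L\delta}{n}\|1_n-n\pi\|_\pi\sigma_W^t\Big)\|\bar w(t)-w_*\|+\frac{\alpha L\delta}{n}\|n\pi\otimes\bar w(t)-w(t)\|_{\pi\otimes1_d}+\frac{\alpha L\delta}{n}\|1_n-n\pi\|_\pi\sigma_W^t\|w_*\|.$$
   Context: $G=(V,E)$ directed on $\{1,\dots,n\}$, self-loop at each vertex, strongly connected; $d_j=|\{i:(j,i)\in E\}|$, $W_{ij}=1/d_j$ if $(j,i)\in E$, else $0$. $\pi$: $W\pi=\pi$, $\pi_i>0$, $\sum\pi_i=1$; $W^\infty=\pi1_n^\top$ (so $(W^\infty\otimes I_d)w=n\pi\otimes\bar w$). $\|x\|_\pi=(\sum_ix_i^2/\pi_i)^{1/2}$ on $\mathbb R^n$, $|||\cdot|||_\pi$ the induced operator norm, $\sigma_W=|||W-W^\infty|||_\pi$ (known $<1$). On $\mathbb R^{nd}$, $\|x\|_{\pi\otimes1_d}=(\sum_i\|x_i\|^2/\pi_i)^{1/2}$. $v\otimes u=\mathrm{col}(v_1u,\dots,v_nu)$. $f_i:\mathbb R^d\to\mathbb R$, $f=\frac1n\sum f_i$; (F1) each $\nabla f_i$ is $L_i$-Lipschitz, $L=\max L_i$; (F2) $f$ is $\beta$-strongly convex, $\beta>0$; $w_*$ is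 the minimizer of $f$. Algorithm with stepsize $\alpha>0$: given $w(0)\in\mathbb R^{nd}$, $y(0)=1_n$; for $t\ge0$: $z_i(t)=w_i(t)/y_i(t)$, $x_i(t)=w_i(t)-\alpha\nabla f_i(z_i(t))$, $w_i(t+1)=\sum_jW_{ij}x_j(t)$, $y_i(t+1)=\sum_jW_{ij}y_j(t)$. $\bar w(t)=\frac1n\sum_iw_i(t)$, $\delta=\sup_{t\ge0}\max_i1/y_i(t)$. *)

theory Defs
  imports "HOL-Analysis.Analysis"
begin

text \<open>Vertices are 1..n; vectors in R^n are functions nat => real (only indices 1..n matter);
 stacked vectors in R^(nd) are functions nat => 'a, 'a a Euclidean space (R^d).\<close>

definition outdeg :: "(nat \<times> nat) set \<Rightarrow> nat \<Rightarrow> nat" where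
  "outdeg E j = card {i. (j, i) \<in> E}"

definition Wmat :: "(nat \<times> nat) set \<Rightarrow> nat \<Rightarrow> nat \<Rightarrow> real" where
  "Wmat E i j = (if (j, i) \<in> E then 1 / real (outdeg E j) else 0)"

definition strongly_connected_on :: "nat \<Rightarrow> (nat \<times> nat) set \<Rightarrow> bool" where
  "strongly_connected_on n E \<longleftrightarrow> (\<forall>i\<in>{1..n}. \<forall>j\<in>{1..n}. (i, j) \<in> E\<^sup>*)"

definition pinorm :: "nat \<Rightarrow> (nat \<Rightarrow> real) \<Rightarrow> (nat \<Rightarrow> real) \<Rightarrow> real" where
  "pinorm n p x = sqrt (\<Sum>i=1..n. (x i)\<^sup>2 / p i)"

definition pinorm_blk :: "nat \<Rightarrow> (nat \<Rightarrow> real) \<Rightarrow> (nat \<Rightarrow> 'a::real_normed_vector) \<Rightarrow> real" where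
  "pinorm_blk n p x = sqrt (\<Sum>i=1..n. (norm (x i))\<^sup>2 / p i)"

definition matvec :: "nat \<Rightarrow> (nat \<Rightarrow> nat \<Rightarrow> real) \<Rightarrow> (nat \<Rightarrow> real) \<Rightarrow> (nat \<Rightarrow> real)" where
  "matvec n M x = (\<lambda>i. \<Sum>j=1..n. M i j * x j)"

definition pi_opnorm :: "nat \<Rightarrow> (nat \<Rightarrow> real) \<Rightarrow> (nat \<Rightarrow> nat \<Rightarrow> real) \<Rightarrow> real" where
  "pi_opnorm n p M = Sup {pinorm n p (matvec n M x) | x. pinorm n p x \<le> 1}"

text \<open>sigma_W = |||W - W^infinity|||_pi with W^infinity = pi 1_n^T\<close>
definition sigmaW :: "nat \<Rightarrow> (nat \<times> nat) set \<Rightarrow> (nat \<Rightarrow> real) \<Rightarrow> real" where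
  "sigmaW n E p = pi_opnorm n p (\<lambda>i j. Wmat E i j - p i)"

definition strongly_convex_with :: "real \<Rightarrow> ('a::real_normed_vector \<Rightarrow> real) \<Rightarrow> bool" where
  "strongly_convex_with \<beta> f \<longleftrightarrow> (\<forall>x y. \<forall>u\<in>{0..1}.
     f ((1 - u) *\<^sub>R x + u *\<^sub>R y) \<le> (1 - u) * f x + u * f y - \<beta> / 2 * u * (1 - u) * (norm (x - y))\<^sup>2)"

fun yseq :: "nat \<Rightarrow> (nat \<times> nat) set \<Rightarrow> nat \<Rightarrow> nat \<Rightarrow> real" where
  "yseq n E 0 = (\<lambda>i. 1)"
| "yseq n E (Suc t) = (\<lambda>i. \<Sum>j=1..n. Wmat E i j * yseq n E t j)"

fun wseq :: "nat \<Rightarrow> (nat \<times> nat) set \<Rightarrow> real \<Rightarrow> (nat \<Rightarrow> 'a::real_normed_vector \<Rightarrow> 'a)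
   \<Rightarrow> (nat \<Rightarrow> 'a) \<Rightarrow> nat \<Rightarrow> nat \<Rightarrow> 'a" where
  "wseq n E \<alpha> g w0 0 = w0"
| "wseq n E \<alpha> g w0 (Suc t) = (\<lambda>i. \<Sum>j=1..n. Wmat E i j *\<^sub>R
      (wseq n E \<alpha> g w0 t j - \<alpha> *\<^sub>R g j ((1 / yseq n E t j) *\<^sub>R wseq n E \<alpha> g w0 t j)))"

definition wbar :: "nat \<Rightarrow> (nat \<Rightarrow> 'a::real_vector) \<Rightarrow> 'a" where
  "wbar n w = (1 / real n) *\<^sub>R (\<Sum>i=1..n. w i)"

definition deltaY :: "nat \<Rightarrow> (nat \<times> nat) set \<Rightarrow> real" where
  "deltaY n E = (SUP t. Max ((\<lambda>i. 1 / yseq n E t i) ` {1..n}))"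

end

theory Submission
  imports Defs
begin


lemma line_deriv:
  fixes F :: "'a::real_inner \<Rightarrow> real"
  assumes deriv: "\<And>x. (F has_derivative (\<lambda>h. inner h (G x))) (at x)"
  shows "((\<lambda>s. F (x + s *\<^sub>R d)) has_real_derivative inner d (G (x + s *\<^sub>R d))) (at s)"
proof -
  have 1: "((\<lambda>s. x + s *\<^sub>R d) has_derivative (\<lambda>h. h *\<^sub>R d)) (at s)"
    by (auto intro!: derivative_eq_intros)
  have "((\<lambda>s. F (x + s *\<^sub>R d)) has_derivative (\<lambda>h. inner (h *\<^sub>R d) (G (x + s *\<^sub>R d)))) (at s)"
    using has_derivative_compose[OF 1 deriv] by simp
  moreover have "(\<lambda>h. inner (h *\<^sub>R d) (G (x + s *\<^sub>R d))) = (*) (inner d (G (x + s *\<^sub>R d)))"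
    by (auto simp: fun_eq_iff)
  ultimately show ?thesis
    unfolding has_field_derivative_def by simp
qed

lemma upper_quad:
  fixes F :: "'a::real_inner \<Rightarrow> real"
  assumes deriv: "\<And>x. (F has_derivative (\<lambda>h. inner h (G x))) (at x)"
    and lip: "\<And>x y. norm (G x - G y) \<le> L * norm (x - y)"
  shows "F y \<le> F x + inner (G x) (y - x) + L / 2 * (norm (y - x))\<^sup>2"
proof -
  define d where "d = y - x"
  define k where "k = (\<lambda>s. F (x + s *\<^sub>R d) - s * inner d (G x) - L / 2 * s\<^sup>2 * (norm d)\<^sup>2)"
  have "k 1 \<le> k 0"
  proof (rule DERIV_nonpos_imp_nonincreasing[of 0 1 k])
    fix s :: real assume s: "0 \<le> s" "s \<le> 1"
    have D: "(k has_real_derivative (inner d (G (x + s *\<^sub>R d)) - inner d (G x) - L / 2 * (2 * s) * (norm d)\<^sup>2)) (at s)"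
      unfolding k_def
      by (rule line_deriv[OF deriv] derivative_eq_intros refl | simp)+
    have "inner d (G (x + s *\<^sub>R d)) - inner d (G x) = inner d (G (x + s *\<^sub>R d) - G x)"
      by (simp add: inner_diff_right)
    also have "\<dots> \<le> norm d * norm (G (x + s *\<^sub>R d) - G x)"
      by (rule norm_cauchy_schwarz)
    also have "\<dots> \<le> norm d * (L * norm (s *\<^sub>R d))"
      using lip[of "x + s *\<^sub>R d" x] by (intro mult_left_mono) auto
    also have "\<dots> = L * s * (norm d)\<^sup>2"
      using s by (simp add: power2_eq_square)
    finally show "\<exists>y. (k has_real_derivative y) (at s) \<and> y \<le> 0"
      using D by (intro exI[of _ "inner d (G (x + s *\<^sub>R d)) - inner d (G x) - L / 2 * (2 * s) * (norm d)\<^sup>2"]) auto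
  qed simp
  then show ?thesis
    unfolding k_def d_def by (simp add: inner_commute)
qed

lemma sc_first:
  fixes F :: "'a::real_inner \<Rightarrow> real"
  assumes deriv: "\<And>x. (F has_derivative (\<lambda>h. inner h (G x))) (at x)"
    and sc: "strongly_convex_with \<beta> F"
  shows "F x + inner (G x) (y - x) + \<beta> / 2 * (norm (y - x))\<^sup>2 \<le> F y"
proof -
  define d where "d = y - x"
  have D: "((\<lambda>s. F (x + s *\<^sub>R d)) has_real_derivative inner d (G x)) (at 0)"
    using line_deriv[OF deriv, of x d 0] by simp
  then have T: "((\<lambda>s. (F (x + s *\<^sub>R d) - F x) / s) \<longlongrightarrow> inner d (G x)) (at_right 0)"
    unfolding has_field_derivative_iff by (auto intro: tendsto_mono[OF at_le])
  have T2: "((\<lambda>s. F y - F x - \<beta> / 2 * (1 - s) * (norm d)\<^sup>2) \<longlongrightarrow> F y - F x - \<beta> / 2 * (1 - 0) * (norm d)\<^sup>2) (at_right 0)"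
    by (intro tendsto_intros)
  have ev: "eventually (\<lambda>s. (F (x + s *\<^sub>R d) - F x) / s \<le> F y - F x - \<beta> / 2 * (1 - s) * (norm d)\<^sup>2) (at_right (0::real))"
    unfolding eventually_at_right[OF zero_less_one]
  proof (intro exI[of _ 1] conjI allI impI)
    fix s :: real assume s: "0 < s" "s < 1"
    have "F ((1 - s) *\<^sub>R x + s *\<^sub>R y) \<le> (1 - s) * F x + s * F y - \<beta> / 2 * s * (1 - s) * (norm (x - y))\<^sup>2"
      using sc s unfolding strongly_convex_with_def by auto
    moreover have "(1 - s) *\<^sub>R x + s *\<^sub>R y = x + s *\<^sub>R d"
      by (simp add: d_def algebra_simps)
    moreover have "norm (x - y) = norm d" by (simp add: d_def norm_minus_commute)
    ultimately have "F (x + s *\<^sub>R d) - F x \<le> s * (F y - F x - \<beta> / 2 * (1 - s) * (norm d)\<^sup>2)"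
      by (simp add: algebra_simps)
    then show "(F (x + s *\<^sub>R d) - F x) / s \<le> F y - F x - \<beta> / 2 * (1 - s) * (norm d)\<^sup>2"
      using s by (simp add: divide_simps mult.commute)
  qed simp
  have "inner d (G x) \<le> F y - F x - \<beta> / 2 * (1 - 0) * (norm d)\<^sup>2"
    by (rule tendsto_le[OF _ T2 T ev]) simp
  then show ?thesis unfolding d_def by (simp add: inner_commute)
qed




lemma norm_diff_scale_sq:
  fixes u v :: "'a::real_inner"
  shows "(norm (u - c *\<^sub>R v))\<^sup>2 = (norm u)\<^sup>2 - 2 * c * inner u v + c\<^sup>2 * (norm v)\<^sup>2"
  unfolding power2_norm_eq_inner by (simp add: inner_diff_left inner_diff_right inner_commute algebra_simps power2_eq_square)

lemma cocoercive_aux: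
  fixes \<phi> :: "'a::real_inner \<Rightarrow> real"
  assumes cvx: "\<And>x z. \<phi> x + inner (h x) (z - x) \<le> \<phi> z"
    and ub: "\<And>x z. \<phi> z \<le> \<phi> x + inner (h x) (z - x) + M / 2 * (norm (z - x))\<^sup>2"
    and M: "M > 0"
  shows "(norm (h y - h x))\<^sup>2 \<le> M * inner (h y - h x) (y - x)"
proof -
  have key: "\<phi> u + inner (h u) (v - u) + (norm (h v - h u))\<^sup>2 / (2 * M) \<le> \<phi> v" for u v
  proof -
    define a where "a = h v - h u"
    define z where "z = v - (1 / M) *\<^sub>R a"
    have 1: "\<phi> u + inner (h u) (z - u) \<le> \<phi> z" by (rule cvx)
    have 2: "\<phi> z \<le> \<phi> v + inner (h v) (z - v) + M / 2 * (norm (z - v))\<^sup>2" by (rule ub)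
    have e1: "z - v = - ((1 / M) *\<^sub>R a)" by (simp add: z_def)
    have e2: "(norm (z - v))\<^sup>2 = (norm a)\<^sup>2 / M^2" unfolding e1 using M
      by (simp add: power_divide power2_eq_square)
    have e3a: "inner (h v) (z - v) - inner (h u) (z - v) = inner a (z - v)"
      by (simp add: a_def inner_diff_left)
    have e3: "inner (h v) (z - v) - inner (h u) (z - v) = - (norm a)\<^sup>2 / M"
    proof -
      have "inner a (z - v) = - (norm a)\<^sup>2 / M" unfolding e1 by (simp add: power2_norm_eq_inner)
      then show ?thesis using e3a by simp
    qed
    have e4: "inner (h u) (z - u) = inner (h u) (v - u) + inner (h u) (z - v)"
      by (simp add: inner_diff_right)
    have "\<phi> u + inner (h u) (v - u) \<le> \<phi> v + (inner (h v) (z - v) - inner (h u) (z - v)) + M / 2 * (norm (z - v))\<^sup>2"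
      using 1 2 e4 by linarith
    also have "\<dots> = \<phi> v - (norm a)\<^sup>2 / (2 * M)"
      unfolding e2 e3 using M by (simp add: field_simps power2_eq_square)
    finally show ?thesis unfolding a_def by simp
  qed
  have A: "\<phi> x + inner (h x) (y - x) + (norm (h y - h x))\<^sup>2 / (2 * M) \<le> \<phi> y" by (rule key)
  have B: "\<phi> y + inner (h y) (x - y) + (norm (h x - h y))\<^sup>2 / (2 * M) \<le> \<phi> x" by (rule key)
  have nn: "norm (h x - h y) = norm (h y - h x)" by (rule norm_minus_commute)
  have "inner (h y - h x) (y - x) = - (inner (h x) (y - x) + inner (h y) (x - y))"
    by (simp add: inner_diff_left inner_diff_right)
  then have "(norm (h y - h x))\<^sup>2 / M \<le> inner (h y - h x) (y - x)"
    using A B nn by (simp add: field_simps)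
  then show ?thesis using M by (simp add: field_simps)
qed

lemma cocoercive:
  fixes F :: "'a::real_inner \<Rightarrow> real"
  assumes low: "\<And>x y. F x + inner (G x) (y - x) + \<beta> / 2 * (norm (y - x))\<^sup>2 \<le> F y"
    and up: "\<And>x y. F y \<le> F x + inner (G x) (y - x) + L / 2 * (norm (y - x))\<^sup>2"
    and bL: "\<beta> \<le> L"
  shows "(norm (G x - G y))\<^sup>2 + L * \<beta> * (norm (x - y))\<^sup>2 \<le> (L + \<beta>) * inner (G x - G y) (x - y)"
proof -
  define \<phi> where "\<phi> = (\<lambda>z. F z - \<beta> / 2 * (norm z)\<^sup>2)"
  define h where "h = (\<lambda>z. G z - \<beta> *\<^sub>R z)"
  have nq: "(norm (z - u))\<^sup>2 = (norm z)\<^sup>2 - (norm u)\<^sup>2 - 2 * inner u (z - u)" for z u :: 'a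
    by (simp add: power2_norm_eq_inner inner_diff_left inner_diff_right inner_commute)
  have hz: "inner (h u) (z - u) = inner (G u) (z - u) - \<beta> * inner u (z - u)" for z u
    by (simp add: h_def inner_diff_left)
  have idt: "\<phi> z - \<phi> u - inner (h u) (z - u) = (F z - F u - inner (G u) (z - u)) - \<beta> / 2 * (norm (z - u))\<^sup>2" for z u
    unfolding \<phi>_def hz nq by (simp add: algebra_simps)
  have cvx: "\<phi> u + inner (h u) (z - u) \<le> \<phi> z" for u z
    using low[of u z] idt[of z u] by linarith
  have ub: "\<phi> z \<le> \<phi> u + inner (h u) (z - u) + M / 2 * (norm (z - u))\<^sup>2" if "M \<ge> L - \<beta>" for u z M
  proof -
    have "(L - \<beta>) / 2 * (norm (z - u))\<^sup>2 \<le> M / 2 * (norm (z - u))\<^sup>2"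
      using that by (intro mult_right_mono) auto
    then show ?thesis
    proof -
      have "(L - \<beta>) / 2 * (norm (z - u))\<^sup>2 = L / 2 * (norm (z - u))\<^sup>2 - \<beta> / 2 * (norm (z - u))\<^sup>2"
        by (simp add: field_simps)
      then show ?thesis using up[of z u] idt[of z u] \<open>(L - \<beta>) / 2 * _ \<le> _\<close> by linarith
    qed
  qed
  define a where "a = h x - h y"
  have all: "(norm a)\<^sup>2 \<le> M * inner a (x - y)" if "M > 0" "M \<ge> L - \<beta>" for M
    using cocoercive_aux[of \<phi> h M x y, OF cvx ub] that unfolding a_def by simp
  have ip: "inner a (x - y) \<ge> 0"
  proof -
    have "0 \<le> (L - \<beta> + 1) * inner a (x - y)"
      using all[of "L - \<beta> + 1"] bL zero_le_power2[of "norm a"] by linarith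
    moreover have "L - \<beta> + 1 > 0" using bL by simp
    ultimately show ?thesis by (simp add: zero_le_mult_iff)
  qed
  have main: "(norm a)\<^sup>2 \<le> (L - \<beta>) * inner a (x - y)"
  proof (rule field_le_epsilon)
    fix e :: real assume e: "e > 0"
    define ip where "ip = inner a (x - y)"
    have ip0: "ip \<ge> 0" using ip unfolding ip_def .
    have pos: "e / (ip + 1) > 0" using e ip0 by simp
    have "(norm a)\<^sup>2 \<le> (L - \<beta> + e / (ip + 1)) * ip" using all[of "L - \<beta> + e / (ip + 1)"] pos bL unfolding ip_def by simp
    also have "\<dots> = (L - \<beta>) * ip + e * (ip / (ip + 1))"
      using ip0 by (simp add: field_simps)
    also have "\<dots> \<le> (L - \<beta>) * ip + e * 1"
      using ip0 e by (intro add_left_mono mult_left_mono) auto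
    finally show "(norm a)\<^sup>2 \<le> (L - \<beta>) * inner a (x - y) + e" unfolding ip_def by simp
  qed
  have ea: "a = (G x - G y) - \<beta> *\<^sub>R (x - y)" unfolding a_def h_def by (simp add: algebra_simps)
  have n2: "(norm a)\<^sup>2 = (norm (G x - G y))\<^sup>2 - 2 * \<beta> * inner (G x - G y) (x - y) + \<beta>\<^sup>2 * (norm (x - y))\<^sup>2"
    unfolding ea norm_diff_scale_sq by simp
  have i2: "inner a (x - y) = inner (G x - G y) (x - y) - \<beta> * (norm (x - y))\<^sup>2"
    unfolding ea by (simp add: power2_norm_eq_inner inner_diff_left)
  show ?thesis using main unfolding n2 i2 by (simp add: algebra_simps power2_eq_square)
qed

lemma contraction:
  fixes F :: "'a::real_inner \<Rightarrow> real"
  assumes low: "\<And>x y. F x + inner (G x) (y - x) + \<beta> / 2 * (norm (y - x))\<^sup>2 \<le> F y"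
    and up: "\<And>x y. F y \<le> F x + inner (G x) (y - x) + L / 2 * (norm (y - x))\<^sup>2"
    and bL: "\<beta> \<le> L" and bpos: "\<beta> > 0" and apos: "\<alpha> > 0" and ale: "\<alpha> \<le> 2 / (L + \<beta>)"
  shows "norm (x - y - \<alpha> *\<^sub>R (G x - G y)) \<le> (1 - \<beta> * L / (L + \<beta>) * \<alpha>) * norm (x - y)"
proof -
  define P where "P = inner (G x - G y) (x - y)"
  define Q where "Q = (norm (G x - G y))\<^sup>2"
  define R where "R = (norm (x - y))\<^sup>2"
  define K where "K = L + \<beta>"
  define \<gamma> where "\<gamma> = \<beta> * L / K"
  have K: "K > 0" using bL bpos unfolding K_def by simp
  have co: "Q + L * \<beta> * R \<le> K * P" unfolding P_def Q_def R_def K_def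
    by (rule cocoercive[OF low up bL])
  have Q0: "Q \<ge> 0" and R0: "R \<ge> 0" unfolding Q_def R_def by auto
  have lhs: "(norm (x - y - \<alpha> *\<^sub>R (G x - G y)))\<^sup>2 = R - 2 * \<alpha> * P + \<alpha>\<^sup>2 * Q"
    unfolding norm_diff_scale_sq P_def Q_def R_def by (simp add: inner_commute)
  have "2 * \<alpha> * P \<ge> 2 * \<alpha> * ((Q + L * \<beta> * R) / K)"
    using co K apos by (intro mult_left_mono) (auto simp: field_simps)
  then have "R - 2 * \<alpha> * P + \<alpha>\<^sup>2 * Q \<le> R - 2 * \<alpha> * ((Q + L * \<beta> * R) / K) + \<alpha>\<^sup>2 * Q"
    by linarith
  also have "\<dots> = (1 - 2 * \<alpha> * \<gamma>) * R + \<alpha> * (\<alpha> - 2 / K) * Q"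
    using K unfolding \<gamma>_def by (simp add: field_simps power2_eq_square)
  also have "\<dots> \<le> (1 - 2 * \<alpha> * \<gamma>) * R"
  proof -
    have "\<alpha> * (\<alpha> - 2 / K) * Q \<le> 0"
      using apos ale Q0 unfolding K_def by (intro mult_nonpos_nonneg mult_nonneg_nonpos) auto
    then show ?thesis by simp
  qed
  also have "\<dots> \<le> (1 - \<alpha> * \<gamma>)\<^sup>2 * R"
  proof -
    have "0 \<le> (\<alpha> * \<gamma>)\<^sup>2" by simp
    then have "1 - 2 * \<alpha> * \<gamma> \<le> (1 - \<alpha> * \<gamma>)\<^sup>2" by (simp add: power2_eq_square algebra_simps)
    then show ?thesis using R0 by (intro mult_right_mono) auto
  qed
  finally have sq: "(norm (x - y - \<alpha> *\<^sub>R (G x - G y)))\<^sup>2 \<le> ((1 - \<alpha> * \<gamma>) * norm (x - y))\<^sup>2"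
    unfolding lhs R_def by (simp add: power_mult_distrib)
  have g1: "\<alpha> * \<gamma> \<le> 1"
  proof -
    have "\<alpha> * \<gamma> \<le> 2 / K * \<gamma>"
      using ale bpos bL K unfolding K_def \<gamma>_def by (intro mult_right_mono) auto
    also have "\<dots> = 2 * \<beta> * L / K\<^sup>2" unfolding \<gamma>_def by (simp add: power2_eq_square)
    also have "\<dots> \<le> 1"
    proof -
      have e: "(L + \<beta>)\<^sup>2 = (L - \<beta>)\<^sup>2 + 4 * (\<beta> * L)" by (simp add: power2_eq_square algebra_simps)
      have "0 \<le> \<beta> * L" using bpos bL by simp
      then have "2 * \<beta> * L \<le> K\<^sup>2" unfolding K_def e using zero_le_power2[of "L - \<beta>"] by linarith
      then show ?thesis using K by (simp add: field_simps)
    qed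
    finally show ?thesis .
  qed
  have "norm (x - y - \<alpha> *\<^sub>R (G x - G y)) \<le> (1 - \<alpha> * \<gamma>) * norm (x - y)"
  proof -
    have "0 \<le> (1 - \<alpha> * \<gamma>) * norm (x - y)" using g1 by simp
    then show ?thesis using power2_le_imp_le[OF sq] by simp
  qed
  moreover have "\<alpha> * \<gamma> = \<beta> * L / (L + \<beta>) * \<alpha>" unfolding \<gamma>_def K_def by simp
  ultimately show ?thesis by simp
qed




locale net =
  fixes n :: nat and E :: "(nat \<times> nat) set" and p :: "nat \<Rightarrow> real"
  assumes n_pos: "n \<ge> 1"
    and E_sub: "E \<subseteq> {1..n} \<times> {1..n}"
    and self_loops: "\<forall>i\<in>{1..n}. (i, i) \<in> E"
    and strong_conn: "strongly_connected_on n E"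
    and p_fix: "\<forall>i\<in>{1..n}. (\<Sum>j=1..n. Wmat E i j * p j) = p i"
    and p_pos: "\<forall>i\<in>{1..n}. p i > 0"
    and p_sum: "(\<Sum>i=1..n. p i) = 1"
begin

lemma out_set: "{i. (j, i) \<in> E} \<subseteq> {1..n}" using E_sub by auto

lemma outdeg_pos: "j \<in> {1..n} \<Longrightarrow> outdeg E j \<ge> 1"
proof -
  assume j: "j \<in> {1..n}"
  have "j \<in> {i. (j, i) \<in> E}" using self_loops j by auto
  moreover have "finite {i. (j, i) \<in> E}" using out_set finite_subset by blast
  ultimately have "card {i. (j, i) \<in> E} \<noteq> 0" by auto
  then show ?thesis unfolding outdeg_def by simp
qed

lemma outdeg_le: "outdeg E j \<le> n"
  unfolding outdeg_def using card_mono[OF _ out_set] by fastforce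

lemma W_nonneg: "Wmat E i j \<ge> 0"
  unfolding Wmat_def by simp

lemma W_edge: "(j, i) \<in> E \<Longrightarrow> Wmat E i j \<ge> 1 / real n"
proof -
  assume e: "(j, i) \<in> E"
  then have j: "j \<in> {1..n}" using E_sub by auto
  have "real (outdeg E j) \<le> real n" using outdeg_le by simp
  moreover have "real (outdeg E j) \<ge> 1" using outdeg_pos[OF j] by simp
  ultimately show ?thesis using e unfolding Wmat_def by (simp add: frac_le)
qed

lemma colsum: "j \<in> {1..n} \<Longrightarrow> (\<Sum>i=1..n. Wmat E i j) = 1"
proof -
  assume j: "j \<in> {1..n}"
  have "(\<Sum>i=1..n. Wmat E i j) = (\<Sum>i\<in>{1..n} \<inter> {i. (j, i) \<in> E}. 1 / real (outdeg E j))"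
    unfolding Wmat_def by (simp add: sum.If_cases)
  also have "{1..n} \<inter> {i. (j, i) \<in> E} = {i. (j, i) \<in> E}" using out_set by auto
  also have "(\<Sum>i\<in>{i. (j, i) \<in> E}. 1 / real (outdeg E j)) = 1"
    using outdeg_pos[OF j] by (simp add: outdeg_def)
  finally show ?thesis .
qed

lemma sum_swap_W:
  fixes x :: "nat \<Rightarrow> 'a::real_vector"
  shows "(\<Sum>i=1..n. \<Sum>j=1..n. Wmat E i j *\<^sub>R x j) = (\<Sum>j=1..n. x j)"
proof -
  have "(\<Sum>i=1..n. \<Sum>j=1..n. Wmat E i j *\<^sub>R x j) = (\<Sum>j=1..n. \<Sum>i=1..n. Wmat E i j *\<^sub>R x j)"
    by (rule sum.swap)
  also have "\<dots> = (\<Sum>j=1..n. (\<Sum>i=1..n. Wmat E i j) *\<^sub>R x j)"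
    by (simp add: scaleR_sum_left)
  also have "\<dots> = (\<Sum>j=1..n. x j)"
  proof (rule sum.cong)
    fix j assume "j \<in> {1..n}"
    from colsum[OF this] show "(\<Sum>i=1..n. Wmat E i j) *\<^sub>R x j = x j" by simp
  qed simp
  finally show ?thesis .
qed

lemma y_nonneg: "yseq n E t i \<ge> 0"
  by (induction t arbitrary: i) (auto intro!: sum_nonneg simp: W_nonneg)

lemma y_sum: "(\<Sum>i=1..n. yseq n E t i) = real n"
proof (induction t)
  case 0 then show ?case by simp
next
  case (Suc t)
  then show ?case using sum_swap_W[of "yseq n E t"] by simp
qed

lemma y_step: "j \<in> {1..n} \<Longrightarrow> yseq n E (Suc t) i \<ge> Wmat E i j * yseq n E t j"
proof -
  assume j: "j \<in> {1..n}"
  have "Wmat E i j * yseq n E t j \<le> (\<Sum>j\<in>{1..n}. Wmat E i j * yseq n E t j)"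
    by (rule member_le_sum[OF j]) (auto intro: mult_nonneg_nonneg W_nonneg y_nonneg)
  then show ?thesis by simp
qed

lemma y_edge: "(j, i) \<in> E \<Longrightarrow> yseq n E (Suc t) i \<ge> yseq n E t j / real n"
proof -
  assume e: "(j, i) \<in> E"
  then have j: "j \<in> {1..n}" using E_sub by auto
  have "yseq n E t j / real n = 1 / real n * yseq n E t j" by simp
  also have "\<dots> \<le> Wmat E i j * yseq n E t j"
    using W_edge[OF e] y_nonneg by (intro mult_right_mono) auto
  also have "\<dots> \<le> yseq n E (Suc t) i" using y_step[OF j] .
  finally show ?thesis .
qed

lemma y_pad: "i \<in> {1..n} \<Longrightarrow> yseq n E (t + s) i \<ge> yseq n E t i / real n ^ s"
proof (induction s)
  case 0 then show ?case by simp
next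
  case (Suc s)
  have np: "real n > 0" using n_pos by simp
  have "yseq n E t i / real n ^ Suc s = (yseq n E t i / real n ^ s) / real n" by simp
  also have "\<dots> \<le> yseq n E (t + s) i / real n"
    using Suc np by (intro divide_right_mono) auto
  also have "\<dots> \<le> yseq n E (Suc (t + s)) i"
    using y_edge[of i i "t + s"] self_loops Suc.prems by auto
  finally show ?case by simp
qed

lemma y_reach:
  assumes "(j, i) \<in> E\<^sup>*" "j \<in> {1..n}"
  shows "\<exists>k. \<forall>t. yseq n E (t + k) i \<ge> yseq n E t j / real n ^ k"
  using assms(1)
proof (induction rule: rtrancl_induct)
  case base
  then show ?case by (intro exI[of _ 0]) simp
next
  case (step m i)
  then obtain k where k: "\<And>t. yseq n E (t + k) m \<ge> yseq n E t j / real n ^ k" by blast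
  have np: "real n > 0" using n_pos by simp
  have "yseq n E t j / real n ^ Suc k \<le> yseq n E (t + Suc k) i" for t
  proof -
    have "yseq n E t j / real n ^ Suc k = (yseq n E t j / real n ^ k) / real n" by simp
    also have "\<dots> \<le> yseq n E (t + k) m / real n"
      using k np by (intro divide_right_mono) auto
    also have "\<dots> \<le> yseq n E (Suc (t + k)) i" using y_edge[OF step(2)] .
    finally show ?thesis by simp
  qed
  then show ?case by blast
qed

lemma y_lower: "\<exists>c>0. \<forall>t. \<forall>i\<in>{1..n}. yseq n E t i \<ge> c"
proof -
  have np: "real n \<ge> 1" using n_pos by simp
  define kf where "kf = (\<lambda>(j, i). SOME k. \<forall>t. yseq n E (t + k) i \<ge> yseq n E t j / real n ^ k)"
  have kf: "\<forall>t. yseq n E (t + kf (j, i)) i \<ge> yseq n E t j / real n ^ kf (j, i)"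
    if "j \<in> {1..n}" "i \<in> {1..n}" for i j
  proof -
    have "(j, i) \<in> E\<^sup>*" using strong_conn that unfolding strongly_connected_on_def by auto
    from y_reach[OF this that(1)]
    have "\<forall>t. yseq n E (t + (SOME k. \<forall>t. yseq n E (t + k) i \<ge> yseq n E t j / real n ^ k)) i \<ge> yseq n E t j / real n ^ (SOME k. \<forall>t. yseq n E (t + k) i \<ge> yseq n E t j / real n ^ k)"
      by (rule someI_ex)
    then show ?thesis unfolding kf_def by simp
  qed
  define K where "K = Max (kf ` ({1..n} \<times> {1..n}))"
  have KK: "yseq n E (t + K) i \<ge> yseq n E t j / real n ^ K" if "j \<in> {1..n}" "i \<in> {1..n}" for i j t
  proof -
    have le: "kf (j, i) \<le> K" unfolding K_def using that by (intro Max_ge) auto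
    have "yseq n E t j / real n ^ K = (yseq n E t j / real n ^ kf (j, i)) / real n ^ (K - kf (j, i))"
      using le np by (simp add: power_add[symmetric])
    also have "\<dots> \<le> yseq n E (t + kf (j, i)) i / real n ^ (K - kf (j, i))"
      using kf[OF that] np by (intro divide_right_mono) auto
    also have "\<dots> \<le> yseq n E (t + kf (j, i) + (K - kf (j, i))) i"
      by (rule y_pad[OF that(2)])
    also have "t + kf (j, i) + (K - kf (j, i)) = t + K" using le by simp
    finally show ?thesis .
  qed
  have "yseq n E t i \<ge> 1 / real n ^ K" if i: "i \<in> {1..n}" for t i
  proof (cases "t < K")
    case True
    have "1 / real n ^ K \<le> 1 / real n ^ t"
      using np True by (intro divide_left_mono power_increasing) auto
    also have "\<dots> = yseq n E 0 i / real n ^ t" by simp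
    also have "\<dots> \<le> yseq n E (0 + t) i" by (rule y_pad[OF i])
    finally show ?thesis by simp
  next
    case False
    then obtain t0 where t0: "t = t0 + K" by (metis add.commute le_add_diff_inverse not_less)
    have "\<exists>j\<in>{1..n}. yseq n E t0 j \<ge> 1"
    proof (rule ccontr)
      assume "\<not> ?thesis"
      then have "\<forall>j\<in>{1..n}. yseq n E t0 j < 1" by auto
      then have "(\<Sum>j=1..n. yseq n E t0 j) < (\<Sum>j=1..n. 1)"
        using n_pos by (intro sum_strict_mono) auto
      then show False using y_sum[of t0] by simp
    qed
    then obtain j where j: "j \<in> {1..n}" "yseq n E t0 j \<ge> 1" by blast
    have "1 / real n ^ K \<le> yseq n E t0 j / real n ^ K"
      using j np by (intro divide_right_mono) auto
    also have "\<dots> \<le> yseq n E t i" unfolding t0 by (rule KK[OF j(1) i])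
    finally show ?thesis .
  qed
  moreover have "1 / real n ^ K > 0" using np by simp
  ultimately show ?thesis by blast
qed

end



context net begin

lemma pp: "i \<in> {1..n} \<Longrightarrow> p i > 0" using p_pos by auto
lemma pp': "Suc 0 \<le> i \<Longrightarrow> i \<le> n \<Longrightarrow> p i > 0" using p_pos by auto
lemma pn: "Suc 0 \<le> i \<Longrightarrow> i \<le> n \<Longrightarrow> p i \<ge> 0" using p_pos by (auto intro: less_imp_le)

lemma p_le1: "i \<in> {1..n} \<Longrightarrow> p i \<le> 1"
proof -
  assume i: "i \<in> {1..n}"
  have "p i \<le> (\<Sum>j\<in>{1..n}. p j)"
    by (rule member_le_sum[OF i]) (auto intro: pn)
  then show ?thesis using p_sum by simp
qed

lemma pinorm_sum_nonneg: "(\<Sum>i=1..n. (x i)\<^sup>2 / p i) \<ge> 0"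
  by (intro sum_nonneg divide_nonneg_pos) (auto intro: pp')

lemma pinorm_nonneg: "pinorm n p x \<ge> 0"
  unfolding pinorm_def using pinorm_sum_nonneg by simp

lemma pinorm_cong: "(\<And>i. i \<in> {1..n} \<Longrightarrow> x i = x' i) \<Longrightarrow> pinorm n p x = pinorm n p x'"
  unfolding pinorm_def by (intro arg_cong[where f=sqrt] sum.cong) auto

lemma pinorm_scale: "pinorm n p (\<lambda>i. c * x i) = \<bar>c\<bar> * pinorm n p x"
proof -
  have "(\<Sum>i=1..n. (c * x i)\<^sup>2 / p i) = c\<^sup>2 * (\<Sum>i=1..n. (x i)\<^sup>2 / p i)"
    by (simp add: sum_distrib_left power_mult_distrib)
  then show ?thesis unfolding pinorm_def by (simp add: real_sqrt_mult)
qed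

lemma comp_le: "i \<in> {1..n} \<Longrightarrow> (x i)\<^sup>2 \<le> p i * (pinorm n p x)\<^sup>2"
proof -
  assume i: "i \<in> {1..n}"
  have pi: "p i > 0" using p_pos i by auto
  have "(x i)\<^sup>2 / p i \<le> (\<Sum>j\<in>{1..n}. (x j)\<^sup>2 / p j)"
  proof (rule member_le_sum[OF i])
    fix j assume "j \<in> {1..n} - {i}"
    then have "p j > 0" using pp by auto
    then show "0 \<le> (x j)\<^sup>2 / p j" by simp
  qed simp
  also have "\<dots> = (pinorm n p x)\<^sup>2"
    unfolding pinorm_def by (rule real_sqrt_pow2[symmetric]) (rule pinorm_sum_nonneg)
  finally show ?thesis using pi by (simp add: field_simps)
qed

lemma pinorm_zero: "pinorm n p x = 0 \<Longrightarrow> i \<in> {1..n} \<Longrightarrow> x i = 0"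
  using comp_le[of i x] by simp

lemma opnorm_bdd: "bdd_above {pinorm n p (matvec n M x) | x. pinorm n p x \<le> 1}"
proof -
  define C where "C = (\<lambda>i. \<Sum>j=1..n. \<bar>M i j\<bar>)"
  define B where "B = sqrt (\<Sum>i=1..n. (C i)\<^sup>2 / p i)"
  have "pinorm n p (matvec n M x) \<le> B" if x: "pinorm n p x \<le> 1" for x
  proof -
    have xj: "\<bar>x j\<bar> \<le> 1" if j: "j \<in> {1..n}" for j
    proof -
      have "(x j)\<^sup>2 \<le> p j * (pinorm n p x)\<^sup>2" by (rule comp_le[OF j])
      also have "\<dots> \<le> 1 * 1"
        using p_le1[OF j] p_pos j x pinorm_nonneg[of x]
        by (intro mult_mono) (auto simp: power_le_one)
      finally have "(x j)\<^sup>2 \<le> 1" by simp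
      from real_sqrt_le_mono[OF this] show ?thesis by simp
    qed
    have "\<bar>matvec n M x i\<bar> \<le> C i" for i
    proof -
      have "\<bar>matvec n M x i\<bar> \<le> (\<Sum>j=1..n. \<bar>M i j * x j\<bar>)"
        unfolding matvec_def by (rule sum_abs)
      also have "\<dots> \<le> (\<Sum>j=1..n. \<bar>M i j\<bar>)"
        using xj by (intro sum_mono) (auto simp: abs_mult intro: mult_left_le)
      finally show ?thesis unfolding C_def .
    qed
    then have "(matvec n M x i)\<^sup>2 \<le> (C i)\<^sup>2" for i
    proof -
      have "\<bar>matvec n M x i\<bar>\<^sup>2 \<le> (C i)\<^sup>2" by (rule power_mono[OF \<open>\<bar>matvec n M x i\<bar> \<le> C i\<close> abs_ge_zero])
      then show ?thesis by simp
    qed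
    then show ?thesis unfolding pinorm_def B_def
      by (intro real_sqrt_le_mono sum_mono divide_right_mono) (auto intro: pn)
  qed
  then show ?thesis by (intro bdd_aboveI[where M=B]) blast
qed

lemma opnorm_nonneg: "pi_opnorm n p M \<ge> 0"
proof -
  have "pinorm n p (matvec n M (\<lambda>_. 0)) \<in> {pinorm n p (matvec n M x) | x. pinorm n p x \<le> 1}"
    by (auto simp: pinorm_def)
  from cSup_upper[OF this opnorm_bdd] show ?thesis
    unfolding pi_opnorm_def by (simp add: pinorm_def matvec_def)
qed

lemma opnorm_le: "pinorm n p (matvec n M x) \<le> pi_opnorm n p M * pinorm n p x"
proof (cases "pinorm n p x = 0")
  case True
  then have "matvec n M x i = 0" if "i \<in> {1..n}" for i
    unfolding matvec_def using pinorm_zero[OF True] by simp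
  then have "pinorm n p (matvec n M x) = pinorm n p (\<lambda>_. 0)" by (rule pinorm_cong)
  then show ?thesis using True by (simp add: pinorm_def)
next
  case False
  define r where "r = pinorm n p x"
  have r: "r > 0" using False pinorm_nonneg[of x] unfolding r_def by simp
  define x' where "x' = (\<lambda>i. (1 / r) * x i)"
  define mx where "mx = matvec n M x"
  have "pinorm n p x' = 1" unfolding x'_def pinorm_scale using r by (simp add: r_def)
  then have "pinorm n p (matvec n M x') \<in> {pinorm n p (matvec n M x) | x. pinorm n p x \<le> 1}"
    by auto
  from cSup_upper[OF this opnorm_bdd] have "pinorm n p (matvec n M x') \<le> pi_opnorm n p M"
    unfolding pi_opnorm_def .
  moreover have eq: "matvec n M x' = (\<lambda>i. (1 / r) * mx i)"
    unfolding x'_def matvec_def mx_def by (auto simp: sum_distrib_left algebra_simps)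
  moreover have "pinorm n p (\<lambda>i. (1 / r) * mx i) = (1 / r) * pinorm n p mx"
    by (simp only: pinorm_scale) (use r in simp)
  ultimately have "(1 / r) * pinorm n p mx \<le> pi_opnorm n p M"
    by simp
  then show ?thesis using r by (simp add: r_def mx_def field_simps)
qed

lemma sigma_nonneg: "sigmaW n E p \<ge> 0"
  unfolding sigmaW_def by (rule opnorm_nonneg)

lemma y_contract: "pinorm n p (\<lambda>i. yseq n E t i - real n * p i) \<le> sigmaW n E p ^ t * pinorm n p (\<lambda>i. 1 - real n * p i)"
proof (induction t)
  case 0 then show ?case by simp
next
  case (Suc t)
  define v where "v = (\<lambda>i. yseq n E t i - real n * p i)"
  have sv: "(\<Sum>j=1..n. v j) = 0" unfolding v_def using y_sum[of t] p_sum
    by (simp add: sum_subtractf sum_distrib_left[symmetric])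
  have "matvec n (\<lambda>i j. Wmat E i j - p i) v i = yseq n E (Suc t) i - real n * p i" if i: "i \<in> {1..n}" for i
  proof -
    have "matvec n (\<lambda>i j. Wmat E i j - p i) v i = (\<Sum>j=1..n. Wmat E i j * v j) - p i * (\<Sum>j=1..n. v j)"
      unfolding matvec_def by (simp add: algebra_simps sum_subtractf sum_distrib_left)
    also have "\<dots> = (\<Sum>j=1..n. Wmat E i j * v j)" using sv by simp
    also have "\<dots> = (\<Sum>j=1..n. Wmat E i j * yseq n E t j) - real n * (\<Sum>j=1..n. Wmat E i j * p j)"
      unfolding v_def by (simp add: algebra_simps sum_subtractf sum_distrib_left)
    also have "\<dots> = yseq n E (Suc t) i - real n * p i" using p_fix i by simp
    finally show ?thesis .
  qed
  then have "pinorm n p (\<lambda>i. yseq n E (Suc t) i - real n * p i) = pinorm n p (matvec n (\<lambda>i j. Wmat E i j - p i) v)"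
    by (intro pinorm_cong) simp
  also have "\<dots> \<le> sigmaW n E p * pinorm n p v"
    unfolding sigmaW_def by (rule opnorm_le)
  also have "\<dots> \<le> sigmaW n E p * (sigmaW n E p ^ t * pinorm n p (\<lambda>i. 1 - real n * p i))"
    using Suc sigma_nonneg unfolding v_def by (intro mult_left_mono) auto
  finally show ?case by simp
qed

lemma sum_le_pinorm_aux:
  assumes a: "\<And>j. j \<in> {1..n} \<Longrightarrow> a j \<ge> 0"
  shows "(\<Sum>j=1..n. a j) \<le> sqrt (\<Sum>j=1..n. (a j)\<^sup>2 / p j)"
proof -
  define S where "S = (\<Sum>j=1..n. a j)"
  have S0: "S \<ge> 0" unfolding S_def using a by (auto intro: sum_nonneg)
  have "0 \<le> (\<Sum>j=1..n. p j * (a j / p j - S)\<^sup>2)"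
    by (intro sum_nonneg mult_nonneg_nonneg) (auto intro: pn)
  also have "\<dots> = (\<Sum>j=1..n. (a j)\<^sup>2 / p j - 2 * S * a j + S\<^sup>2 * p j)"
  proof (intro sum.cong refl)
    fix j assume "j \<in> {1..n}"
    then have "p j > 0" by (rule pp)
    then show "p j * (a j / p j - S)\<^sup>2 = (a j)\<^sup>2 / p j - 2 * S * a j + S\<^sup>2 * p j"
      by (simp add: power2_eq_square field_simps)
  qed
  also have "\<dots> = (\<Sum>j=1..n. (a j)\<^sup>2 / p j) - 2 * S * S + S\<^sup>2 * 1"
    unfolding p_sum[symmetric] by (simp add: sum.distrib sum_subtractf sum_distrib_left S_def)
  finally have "S\<^sup>2 \<le> (\<Sum>j=1..n. (a j)\<^sup>2 / p j)" by (simp add: power2_eq_square)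
  then show ?thesis unfolding S_def[symmetric] using S0 by (simp add: real_le_rsqrt)
qed

lemma sum_abs_le_pinorm: "(\<Sum>j=1..n. \<bar>v j\<bar>) \<le> pinorm n p v"
  unfolding pinorm_def using sum_le_pinorm_aux[of "\<lambda>j. \<bar>v j\<bar>"] by simp

lemma sum_norm_le_pinorm_blk: "(\<Sum>j=1..n. norm (v j)) \<le> pinorm_blk n p v"
  unfolding pinorm_blk_def using sum_le_pinorm_aux[of "\<lambda>j. norm (v j)"] by simp

lemma delta_bound: "j \<in> {1..n} \<Longrightarrow> 1 / yseq n E t j \<le> deltaY n E"
proof -
  assume j: "j \<in> {1..n}"
  obtain c where c: "c > 0" "\<And>t i. i \<in> {1..n} \<Longrightarrow> yseq n E t i \<ge> c" using y_lower by blast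
  have "Max ((\<lambda>i. 1 / yseq n E t i) ` {1..n}) \<le> 1 / c" for t
  proof -
    have "1 / yseq n E t i \<le> 1 / c" if i: "i \<in> {1..n}" for i
    proof -
      have "c \<le> yseq n E t i" using c(2)[OF i] .
      then show ?thesis using c(1) by (intro divide_left_mono) auto
    qed
    then show ?thesis using n_pos by (subst Max_le_iff) auto
  qed
  then have bdd: "bdd_above (range (\<lambda>t. Max ((\<lambda>i. 1 / yseq n E t i) ` {1..n})))"
    by (intro bdd_aboveI[where M="1/c"]) blast
  have "1 / yseq n E t j \<le> Max ((\<lambda>i. 1 / yseq n E t i) ` {1..n})"
    using j by (intro Max_ge) auto
  also have "\<dots> \<le> deltaY n E" unfolding deltaY_def
    by (rule cSUP_upper[OF UNIV_I bdd])
  finally show ?thesis .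
qed

lemma y_pos: "j \<in> {1..n} \<Longrightarrow> yseq n E t j > 0"
  using y_lower by (meson less_le_trans)

lemma delta_nonneg: "deltaY n E \<ge> 0"
proof -
  have "1 \<in> {1..n}" using n_pos by simp
  from delta_bound[OF this, of 0] y_pos[OF this, of 0] show ?thesis
    by (meson less_le_trans less_eq_real_def zero_less_divide_1_iff)
qed

lemma wbar_step:
  fixes g :: "nat \<Rightarrow> 'a::real_normed_vector \<Rightarrow> 'a"
  shows "wbar n (wseq n E \<alpha> g w0 (Suc t)) = wbar n (wseq n E \<alpha> g w0 t)
     - (\<alpha> / real n) *\<^sub>R (\<Sum>j=1..n. g j ((1 / yseq n E t j) *\<^sub>R wseq n E \<alpha> g w0 t j))"
proof -
  let ?w = "wseq n E \<alpha> g w0 t"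
  let ?G = "\<Sum>j=1..n. g j ((1 / yseq n E t j) *\<^sub>R ?w j)"
  have "(\<Sum>i=1..n. wseq n E \<alpha> g w0 (Suc t) i) = (\<Sum>j=1..n. ?w j - \<alpha> *\<^sub>R g j ((1 / yseq n E t j) *\<^sub>R ?w j))"
    using sum_swap_W[of "\<lambda>j. ?w j - \<alpha> *\<^sub>R g j ((1 / yseq n E t j) *\<^sub>R ?w j)"] by simp
  also have "\<dots> = (\<Sum>j=1..n. ?w j) - \<alpha> *\<^sub>R ?G"
    by (simp only: sum_subtractf scaleR_sum_right)
  finally have S: "(\<Sum>i=1..n. wseq n E \<alpha> g w0 (Suc t) i) = (\<Sum>j=1..n. ?w j) - \<alpha> *\<^sub>R ?G" .
  have "wbar n (wseq n E \<alpha> g w0 (Suc t)) = (1 / real n) *\<^sub>R (\<Sum>i=1..n. wseq n E \<alpha> g w0 (Suc t) i)"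
    by (simp only: wbar_def)
  also have "\<dots> = (1 / real n) *\<^sub>R ((\<Sum>j=1..n. ?w j) - \<alpha> *\<^sub>R ?G)" by (simp only: S)
  also have "\<dots> = wbar n ?w - (\<alpha> / real n) *\<^sub>R ?G"
    unfolding wbar_def by (simp add: scaleR_diff_right)
  finally show ?thesis .
qed

end



theorem proposition6p2:
  fixes n :: nat and E :: "(nat \<times> nat) set" and p :: "nat \<Rightarrow> real"
    and f :: "nat \<Rightarrow> 'a::euclidean_space \<Rightarrow> real" and g :: "nat \<Rightarrow> 'a \<Rightarrow> 'a"
    and Ls :: "nat \<Rightarrow> real" and \<beta> \<alpha> :: real and ws :: 'a and w0 :: "nat \<Rightarrow> 'a" and t :: nat
  assumes n_pos: "n \<ge> 1"
    and E_sub: "E \<subseteq> {1..n} \<times> {1..n}"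
    and self_loops: "\<forall>i\<in>{1..n}. (i, i) \<in> E"
    and strong_conn: "strongly_connected_on n E"
    and p_fix: "\<forall>i\<in>{1..n}. (\<Sum>j=1..n. Wmat E i j * p j) = p i"
    and p_pos: "\<forall>i\<in>{1..n}. p i > 0"
    and p_sum: "(\<Sum>i=1..n. p i) = 1"
    and grad: "\<forall>i\<in>{1..n}. \<forall>x. GDERIV (f i) x :> g i x"
    and F1: "\<forall>i\<in>{1..n}. (Ls i)-lipschitz_on UNIV (g i)"
    and F2: "strongly_convex_with \<beta> (\<lambda>x. (1 / real n) * (\<Sum>i=1..n. f i x))"
    and beta_pos: "\<beta> > 0"
    and ws_min: "\<forall>x. (1 / real n) * (\<Sum>i=1..n. f i ws) \<le> (1 / real n) * (\<Sum>i=1..n. f i x)"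
    and alpha_pos: "\<alpha> > 0"
    and alpha_le: "\<alpha> \<le> 2 / (Max (Ls ` {1..n}) + \<beta>)"
  shows "let L = Max (Ls ` {1..n}); \<gamma> = \<beta> * L / (L + \<beta>); \<delta> = deltaY n E;
             \<sigma> = sigmaW n E p; w = wseq n E \<alpha> g w0;
             c = \<alpha> * L * \<delta> / real n * pinorm n p (\<lambda>i. 1 - real n * p i) * \<sigma> ^ t
         in norm (wbar n (w (Suc t)) - ws)
            \<le> (1 - \<gamma> * \<alpha> + c) * norm (wbar n (w t) - ws)
              + \<alpha> * L * \<delta> / real n * pinorm_blk n p (\<lambda>i. (real n * p i) *\<^sub>R wbar n (w t) - w t i)
              + c * norm ws"
proof -
  interpret net n E p
    using n_pos E_sub self_loops strong_conn p_fix p_pos p_sum by unfold_locales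
  define L where "L = Max (Ls ` {1..n})"
  define F where "F = (\<lambda>x. (1 / real n) * (\<Sum>i=1..n. f i x))"
  define G where "G = (\<lambda>x. (1 / real n) *\<^sub>R (\<Sum>i=1..n. g i x))"
  have np: "real n > 0" using n_pos by simp
  have one: "1 \<in> {1..n}" using n_pos by simp
  have Lsle: "Ls i \<le> L" if "i \<in> {1..n}" for i
    unfolding L_def using that by (intro Max_ge) auto
  have Ls0: "0 \<le> Ls i" if "i \<in> {1..n}" for i
    using F1 that lipschitz_on_nonneg by blast
  have L0: "0 \<le> L" using Lsle[OF one] Ls0[OF one] by linarith
  have glip: "norm (g i x - g i y) \<le> L * norm (x - y)" if i: "i \<in> {1..n}" for i x y
  proof -
    have "norm (g i x - g i y) \<le> Ls i * norm (x - y)"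
      using lipschitz_on_normD[OF bspec[OF F1 i]] by simp
    also have "\<dots> \<le> L * norm (x - y)" using Lsle[OF i] by (intro mult_right_mono) auto
    finally show ?thesis .
  qed
  have deriv: "(F has_derivative (\<lambda>h. inner h (G x))) (at x)" for x
  proof -
    have "((\<lambda>x. \<Sum>i=1..n. f i x) has_derivative (\<lambda>h. \<Sum>i=1..n. inner h (g i x))) (at x)"
      using grad by (intro has_derivative_sum) (auto simp: gderiv_def)
    from has_derivative_mult_right[OF this, of "1 / real n"]
    have "(F has_derivative (\<lambda>h. (1 / real n) * (\<Sum>i=1..n. inner h (g i x)))) (at x)"
      unfolding F_def .
    moreover have "(\<lambda>h. (1 / real n) * (\<Sum>i=1..n. inner h (g i x))) = (\<lambda>h. inner h (G x))"
      unfolding G_def by (auto simp: inner_sum_right)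
    ultimately show ?thesis by simp
  qed
  have lip: "norm (G x - G y) \<le> L * norm (x - y)" for x y
  proof -
    have "G x - G y = (1 / real n) *\<^sub>R (\<Sum>i=1..n. g i x - g i y)"
      unfolding G_def by (simp add: sum_subtractf scaleR_diff_right)
    then have "norm (G x - G y) = (1 / real n) * norm (\<Sum>i=1..n. g i x - g i y)"
      using np by simp
    also have "\<dots> \<le> (1 / real n) * (\<Sum>i=1..n. norm (g i x - g i y))"
      using np by (intro mult_left_mono norm_sum) auto
    also have "\<dots> \<le> (1 / real n) * (\<Sum>i=1..n. L * norm (x - y))"
      using np glip by (intro mult_left_mono sum_mono) auto
    also have "\<dots> = L * norm (x - y)" using np by simp
    finally show ?thesis .
  qed
  have low: "F x + inner (G x) (y - x) + \<beta> / 2 * (norm (y - x))\<^sup>2 \<le> F y" for x y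
    by (rule sc_first[OF deriv]) (use F2 in \<open>simp add: F_def\<close>)
  have up: "F y \<le> F x + inner (G x) (y - x) + L / 2 * (norm (y - x))\<^sup>2" for x y
    by (rule upper_quad[OF deriv lip])
  have bL: "\<beta> \<le> L"
  proof -
    obtain b :: 'a where b: "b \<in> Basis" using nonempty_Basis by blast
    have nb: "norm b = 1" using b by simp
    have "F 0 + inner (G 0) (b - 0) + \<beta> / 2 * (norm (b - 0))\<^sup>2 \<le> F 0 + inner (G 0) (b - 0) + L / 2 * (norm (b - 0))\<^sup>2"
      using low[of 0 b] up[of b 0] by linarith
    then show ?thesis using nb by simp
  qed
  have Gws: "G ws = 0"
  proof -
    have "(\<lambda>h. inner h (G ws)) = (\<lambda>h. 0)"
      by (rule has_derivative_local_min[OF deriv]) (use ws_min in \<open>simp add: F_def\<close>)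
    then have "inner (G ws) (G ws) = 0" by meson
    then show ?thesis by simp
  qed
  define w where "w = wseq n E \<alpha> g w0"
  define wb where "wb = wbar n (w t)"
  define y where "y = yseq n E t"
  define z where "z = (\<lambda>j. (1 / y j) *\<^sub>R w t j)"
  define R where "R = norm (wb - ws)"
  define \<delta> where "\<delta> = deltaY n E"
  define \<sigma> where "\<sigma> = sigmaW n E p"
  define N1 where "N1 = pinorm n p (\<lambda>i. 1 - real n * p i)"
  define N2 where "N2 = pinorm_blk n p (\<lambda>i. (real n * p i) *\<^sub>R wb - w t i)"
  define \<gamma> where "\<gamma> = \<beta> * L / (L + \<beta>)"
  define S where "S = (\<Sum>j=1..n. g j wb - g j (z j))"
  have step: "wbar n (w (Suc t)) = wb - (\<alpha> / real n) *\<^sub>R (\<Sum>j=1..n. g j (z j))"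
    unfolding w_def wb_def z_def y_def by (rule wbar_step)
  have decomp: "wbar n (w (Suc t)) - ws = (wb - ws - \<alpha> *\<^sub>R (G wb - G ws)) + (\<alpha> / real n) *\<^sub>R S"
  proof -
    have "\<alpha> *\<^sub>R G wb = (\<alpha> / real n) *\<^sub>R (\<Sum>j=1..n. g j wb)" unfolding G_def by simp
    moreover have "S = (\<Sum>j=1..n. g j wb) - (\<Sum>j=1..n. g j (z j))" unfolding S_def by (simp add: sum_subtractf)
    then have S2: "(\<Sum>j=1..n. g j wb) = S + (\<Sum>j=1..n. g j (z j))" by simp
    have "(\<alpha> / real n) *\<^sub>R (\<Sum>j=1..n. g j wb) = (\<alpha> / real n) *\<^sub>R S + (\<alpha> / real n) *\<^sub>R (\<Sum>j=1..n. g j (z j))"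
      by (metis S2 scaleR_add_right)
    ultimately show ?thesis unfolding step Gws by (simp add: algebra_simps)
  qed
  have c1: "norm (wb - ws - \<alpha> *\<^sub>R (G wb - G ws)) \<le> (1 - \<gamma> * \<alpha>) * R"
    unfolding \<gamma>_def R_def
    by (rule contraction[OF low up bL beta_pos alpha_pos]) (use alpha_le in \<open>simp add: L_def\<close>)
  have \<delta>0: "\<delta> \<ge> 0" unfolding \<delta>_def by (rule delta_nonneg)
  have \<sigma>0: "\<sigma> \<ge> 0" unfolding \<sigma>_def by (rule sigma_nonneg)
  have N10: "N1 \<ge> 0" unfolding N1_def by (rule pinorm_nonneg)
  have perj: "norm (g j wb - g j (z j)) \<le> L * \<delta> * (\<bar>y j - real n * p j\<bar> * norm wb + norm ((real n * p j) *\<^sub>R wb - w t j))"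
    if j: "j \<in> {1..n}" for j
  proof -
    have yp: "y j > 0" unfolding y_def by (rule y_pos[OF j])
    have "wb - z j = (1 / y j) *\<^sub>R (y j *\<^sub>R wb - w t j)"
      unfolding z_def using yp by (simp add: scaleR_diff_right)
    then have "norm (wb - z j) = (1 / y j) * norm (y j *\<^sub>R wb - w t j)" using yp by simp
    also have "\<dots> \<le> \<delta> * norm (y j *\<^sub>R wb - w t j)"
      unfolding \<delta>_def y_def using delta_bound[OF j] by (intro mult_right_mono) auto
    also have "norm (y j *\<^sub>R wb - w t j) \<le> \<bar>y j - real n * p j\<bar> * norm wb + norm ((real n * p j) *\<^sub>R wb - w t j)"
    proof -
      have "y j *\<^sub>R wb - w t j = (y j - real n * p j) *\<^sub>R wb + ((real n * p j) *\<^sub>R wb - w t j)"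
        by (simp add: algebra_simps)
      then show ?thesis by (metis norm_scaleR norm_triangle_ineq)
    qed
    then have "\<delta> * norm (y j *\<^sub>R wb - w t j) \<le> \<delta> * (\<bar>y j - real n * p j\<bar> * norm wb + norm ((real n * p j) *\<^sub>R wb - w t j))"
      using \<delta>0 by (intro mult_left_mono) auto
    finally have "norm (wb - z j) \<le> \<delta> * (\<bar>y j - real n * p j\<bar> * norm wb + norm ((real n * p j) *\<^sub>R wb - w t j))" .
    moreover have "norm (g j wb - g j (z j)) \<le> L * norm (wb - z j)" by (rule glip[OF j])
    ultimately show ?thesis using L0 by (smt (verit) mult.assoc mult_left_mono)
  qed
  have c2: "norm S \<le> L * \<delta> * (norm wb * (\<sigma> ^ t * N1) + N2)"
  proof -
    have "norm S \<le> (\<Sum>j=1..n. norm (g j wb - g j (z j)))" unfolding S_def by (rule norm_sum)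
    also have "\<dots> \<le> (\<Sum>j=1..n. L * \<delta> * (\<bar>y j - real n * p j\<bar> * norm wb + norm ((real n * p j) *\<^sub>R wb - w t j)))"
      by (intro sum_mono perj) auto
    also have "\<dots> = L * \<delta> * (norm wb * (\<Sum>j=1..n. \<bar>y j - real n * p j\<bar>) + (\<Sum>j=1..n. norm ((real n * p j) *\<^sub>R wb - w t j)))"
      by (simp add: sum_distrib_left sum.distrib algebra_simps)
    also have "\<dots> \<le> L * \<delta> * (norm wb * (\<sigma> ^ t * N1) + N2)"
    proof -
      have "(\<Sum>j=1..n. \<bar>y j - real n * p j\<bar>) \<le> \<sigma> ^ t * N1"
        using sum_abs_le_pinorm[of "\<lambda>j. y j - real n * p j"] y_contract[of t]
        unfolding y_def \<sigma>_def N1_def by linarith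
      moreover have "(\<Sum>j=1..n. norm ((real n * p j) *\<^sub>R wb - w t j)) \<le> N2"
        unfolding N2_def by (rule sum_norm_le_pinorm_blk)
      ultimately show ?thesis using L0 \<delta>0
        by (intro mult_left_mono add_mono) (auto intro: mult_nonneg_nonneg)
    qed
    finally show ?thesis .
  qed
  define K where "K = \<alpha> * L * \<delta> / real n"
  have K0: "K \<ge> 0" unfolding K_def using alpha_pos L0 \<delta>0 np by simp
  have A0: "\<sigma> ^ t * N1 \<ge> 0" using \<sigma>0 N10 by simp
  have nwb: "norm wb \<le> R + norm ws" unfolding R_def by (metis norm_triangle_sub add.commute)
  have "norm (wbar n (w (Suc t)) - ws) \<le> norm (wb - ws - \<alpha> *\<^sub>R (G wb - G ws)) + norm ((\<alpha> / real n) *\<^sub>R S)"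
    unfolding decomp by (rule norm_triangle_ineq)
  also have "\<dots> \<le> (1 - \<gamma> * \<alpha>) * R + (\<alpha> / real n) * (L * \<delta> * (norm wb * (\<sigma> ^ t * N1) + N2))"
  proof (rule add_mono[OF c1])
    have "norm ((\<alpha> / real n) *\<^sub>R S) = (\<alpha> / real n) * norm S" using alpha_pos np by simp
    also have "\<dots> \<le> (\<alpha> / real n) * (L * \<delta> * (norm wb * (\<sigma> ^ t * N1) + N2))"
      using c2 alpha_pos np by (intro mult_left_mono) auto
    finally show "norm ((\<alpha> / real n) *\<^sub>R S) \<le> (\<alpha> / real n) * (L * \<delta> * (norm wb * (\<sigma> ^ t * N1) + N2))" .
  qed
  also have "\<dots> = (1 - \<gamma> * \<alpha>) * R + K * (norm wb * (\<sigma> ^ t * N1)) + K * N2"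
    unfolding K_def by (simp add: algebra_simps)
  also have "\<dots> \<le> (1 - \<gamma> * \<alpha>) * R + K * ((R + norm ws) * (\<sigma> ^ t * N1)) + K * N2"
  proof -
    have "K * (norm wb * (\<sigma> ^ t * N1)) \<le> K * ((R + norm ws) * (\<sigma> ^ t * N1))"
      using K0 A0 nwb by (intro mult_left_mono mult_right_mono) auto
    then show ?thesis by linarith
  qed
  also have "\<dots> = (1 - \<gamma> * \<alpha> + K * N1 * \<sigma> ^ t) * R + K * N2 + K * N1 * \<sigma> ^ t * norm ws"
    by (simp add: algebra_simps)
  finally have fin: "norm (wbar n (w (Suc t)) - ws) \<le> (1 - \<gamma> * \<alpha> + K * N1 * \<sigma> ^ t) * R + K * N2 + K * N1 * \<sigma> ^ t * norm ws" .
  show ?thesis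
    unfolding Let_def
    using fin unfolding K_def N1_def N2_def R_def \<gamma>_def \<sigma>_def \<delta>_def wb_def w_def L_def .
qed


end
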